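(* Let $\alpha=(\alpha_1,\dots,\alpha_k)\in\mathbb N^k$ with $k\ge1$ and $\alpha_k>0$, and let $\beta=(\beta_1,\dots,\beta_k)\in\mathbb N^k$. Then $$\widehat M_{\binom{\alpha}{\beta}}=\sum_{I=(i_1,\dots,i_k)}c_{\beta,I}\,M_{(0^{i_1},\alpha_1,0^{i_2},\alpha_2,\dots,0^{i_k},\alpha_k)},$$ where the sum is over all $I$ with $0\le i_j\le\beta_j+\beta_{j+1}+\dots+\beta_k$ for $j=1,\dots,k$.
   Context: $\mathbb P$ and $\mathbb N$ denote positive and nonnegative integers, and $[n]=\{1,\dots,n\}$. Let $X=\{x_i:i\in\mathbb P\}$ be commuting indeterminates. $0^i$ denotes $i$ consecutive zeros. For a sequence $\gamma\in\mathbb N^m$ with $\gamma_m>0$, $M_\gamma=\sum_{0<i_1<\cdots<i_m}x_{i_1}^{\gamma_1}\cdots x_{i_m}^{\gamma_m}$. Also $$\widehat M_{\binom{\alpha}{\beta}}=\sum_{0<i_1<\cdots<i_k}i_1^{\beta_1}\cdots i_k^{\beta_k}x_{i_1}^{\alpha_1}\cdots x_{i_k}^{\alpha_k}.$$ $c_{\beta,I}$ is defined as follows. Put $b_j=\beta_1+\dots+\beta_j$ and $N_j=(i_1+1)+\dots+(i_j+1)$. Then $c_{\beta,I}$ is the number of maps $f:[b_k]\to[N_k]$ with $f([b_j])\subseteq[N_j]$ for all $j$ and $f([b_k])\cup\{N_1,\dots,N_k\}=[N_k]$. If $b_k=0$, the empty map is the only map. *)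

theory Defs
  imports Main "HOL-Library.FuncSet"
begin

text \<open>Formal power series in the commuting variables x_1, x_2, ... are represented by
  their coefficient functions: a monomial is an exponent vector e :: nat \<Rightarrow> nat
  (e v = exponent of x_v), and a series is a map from monomials to coefficients.\<close>

type_synonym series = "(nat \<Rightarrow> nat) \<Rightarrow> nat"

definition monom :: "nat list \<Rightarrow> nat list \<Rightarrow> nat \<Rightarrow> nat" where
  "monom g is = (\<lambda>v. \<Sum>j<length g. if is ! j = v then g ! j else 0)"

definition idx_tuples :: "nat \<Rightarrow> nat list set" where
  "idx_tuples m = {is. length is = m \<and> sorted_wrt (<) is \<and> 0 \<notin> set is}"

definition M :: "nat list \<Rightarrow> series" where
  "M g = (\<lambda>e. card {is \<in> idx_tuples (length g). monom g is = e})"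

definition Mhat :: "nat list \<Rightarrow> nat list \<Rightarrow> series" where
  "Mhat a b = (\<lambda>e. \<Sum>is \<in> {is \<in> idx_tuples (length a). monom a is = e}.
                      \<Prod>j<length a. (is ! j) ^ (b ! j))"

definition pad_comp :: "nat list \<Rightarrow> nat list \<Rightarrow> nat list" where
  "pad_comp a I = concat (map (\<lambda>j. replicate (I ! j) 0 @ [a ! j]) [0..<length a])"

definition bsum :: "nat list \<Rightarrow> nat \<Rightarrow> nat" where
  "bsum b j = sum_list (take j b)"

definition Nsum :: "nat list \<Rightarrow> nat \<Rightarrow> nat" where
  "Nsum I j = sum_list (map Suc (take j I))"

definition c_coef :: "nat list \<Rightarrow> nat list \<Rightarrow> nat" where
  "c_coef b I = (let k = length b in
     card {f \<in> {1..bsum b k} \<rightarrow>\<^sub>E {1..Nsum I k}.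
             (\<forall>j\<in>{1..k}. f ` {1..bsum b j} \<subseteq> {1..Nsum I j}) \<and>
             f ` {1..bsum b k} \<union> {Nsum I j | j. j \<in> {1..k}} = {1..Nsum I k}})"

definition I_range :: "nat list \<Rightarrow> nat list set" where
  "I_range b = {I. length I = length b \<and> (\<forall>j<length b. I ! j \<le> sum_list (drop j b))}"

end

theory Submission
  imports Defs
begin

lemma bsum_Suc: "j < length b \<Longrightarrow> bsum b (Suc j) = bsum b j + b!j"
  by (simp add: bsum_def take_Suc_conv_app_nth)

lemma bsum_mono: "j \<le> j' \<Longrightarrow> bsum b j \<le> bsum b j'"
proof -
  assume "j \<le> j'"
  then obtain d where "j' = j + d" using le_Suc_ex by blast
  then show ?thesis by (simp add: bsum_def take_add)
qed

lemma bsum_drop: "j \<le> length b \<Longrightarrow> bsum b (length b) - bsum b j = sum_list (drop j b)"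
proof -
  have "sum_list b = sum_list (take j b) + sum_list (drop j b)"
    by (metis append_take_drop_id sum_list_append)
  then show ?thesis by (simp add: bsum_def)
qed

lemma bsum_0[simp]: "bsum b 0 = 0" by (simp add: bsum_def)
lemma Nsum_0[simp]: "Nsum I 0 = 0" by (simp add: Nsum_def)

lemma Nsum_Suc: "j < length I \<Longrightarrow> Nsum I (Suc j) = Nsum I j + Suc (I!j)"
  by (simp add: Nsum_def take_Suc_conv_app_nth)

lemma Nsum_less: "j < j' \<Longrightarrow> j' \<le> length I \<Longrightarrow> Nsum I j < Nsum I j'"
proof (induction j')
  case 0 then show ?case by simp
next
  case (Suc j')
  then show ?case using Nsum_Suc[of j' I]
    by (cases "j = j'") (auto simp: less_Suc_eq)
qed

lemma Nsum_mono: "j \<le> j' \<Longrightarrow> j' \<le> length I \<Longrightarrow> Nsum I j \<le> Nsum I j'"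
  using Nsum_less[of j j' I] by (cases "j = j'") auto

lemma Nsum_ge: "j \<le> length I \<Longrightarrow> j \<le> Nsum I j"
proof (induction j)
  case (Suc j) then show ?case using Nsum_Suc[of j I] by simp
qed simp

lemma Nsum_inj:
  assumes "length I = length I'" "\<And>j. j \<le> length I \<Longrightarrow> Nsum I j = Nsum I' j"
  shows "I = I'"
proof (rule nth_equalityI)
  show "length I = length I'" by fact
  fix j assume j: "j < length I"
  have "Nsum I (Suc j) = Nsum I' (Suc j)" "Nsum I j = Nsum I' j" using assms j by auto
  then show "I ! j = I' ! j" using Nsum_Suc[of j I] Nsum_Suc[of j I'] j assms(1) by simp
qed


lemma monom_Nil: "monom [] s v = 0" by (simp add: monom_def)

lemma monom_Cons: "monom (x#g) (y#s) v = (if y = v then x else 0) + monom g s v"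
  unfolding monom_def by (simp only: length_Cons sum.lessThan_Suc_shift) (auto intro!: sum.cong)

lemma monom_append: "length g1 = length s1 \<Longrightarrow>
   monom (g1@g2) (s1@s2) v = monom g1 s1 v + monom g2 s2 v"
proof (induction g1 arbitrary: s1)
  case Nil then show ?case by (simp add: monom_Nil)
next
  case (Cons x g1)
  then obtain y s1' where "s1 = y # s1'" by (cases s1) auto
  with Cons show ?case by (simp add: monom_Cons)
qed

lemma monom_rep0: "monom (replicate i 0) s v = 0"
  unfolding monom_def by simp

lemma pad_comp_Nil: "pad_comp [] I = []" by (simp add: pad_comp_def)

lemma pad_comp_snoc: "length I = length a \<Longrightarrow>
   pad_comp (a@[c]) (I@[i]) = pad_comp a I @ replicate i 0 @ [c]"
proof -
  assume len: "length I = length a"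
  have "map (\<lambda>j. replicate ((I @ [i]) ! j) 0 @ [(a @ [c]) ! j]) [0..<length a]
      = map (\<lambda>j. replicate (I ! j) 0 @ [a ! j]) [0..<length a]"
    using len by (auto simp: nth_append)
  then show ?thesis using len
    by (simp add: pad_comp_def nth_append) (rule arg_cong[where f=concat], rule map_cong, auto)
qed

lemma length_pad_comp: "length I = length a \<Longrightarrow> length (pad_comp a I) = Nsum I (length a)"
proof (induction a arbitrary: I rule: rev_induct)
  case Nil then show ?case by (simp add: pad_comp_Nil)
next
  case (snoc c a)
  then obtain I0 i where I: "I = I0 @ [i]" by (cases I rule: rev_exhaust) auto
  with snoc have l: "length I0 = length a" by simp
  have "Nsum I (length (a@[c])) = Nsum I0 (length a) + Suc i"
    using Nsum_Suc[of "length a" I] I l by (simp add: Nsum_def)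
  then show ?case using snoc.IH[OF l] pad_comp_snoc[OF l] I by simp
qed

lemma monom_pad:
  "length I = length a \<Longrightarrow> length s = Nsum I (length a) \<Longrightarrow>
   monom (pad_comp a I) s v = monom a (map (\<lambda>j. s ! (Nsum I (Suc j) - 1)) [0..<length a]) v"
proof (induction a arbitrary: I s rule: rev_induct)
  case Nil then show ?case by (simp add: pad_comp_Nil monom_Nil)
next
  case (snoc c a)
  then obtain I0 i where I: "I = I0 @ [i]" by (cases I rule: rev_exhaust) auto
  with snoc have l: "length I0 = length a" by simp
  define n where "n = Nsum I0 (length a)"
  have NI: "Nsum I (length a) = n" using I l by (simp add: Nsum_def n_def)
  have NS: "Nsum I (Suc (length a)) = n + Suc i"
    using Nsum_Suc[of "length a" I] I l NI by (simp add: nth_append)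
  have NI0: "j < length a \<Longrightarrow> Nsum I (Suc j) = Nsum I0 (Suc j)" for j
    using I l by (simp add: Nsum_def)
  define s0 where "s0 = take n s"
  define s1 where "s1 = drop n s"
  have ls: "length s = n + Suc i" using snoc.prems NS by simp
  have ls0: "length s0 = Nsum I0 (length a)" using ls by (simp add: s0_def n_def)
  have ls1: "length s1 = Suc i" using ls by (simp add: s1_def)
  have s: "s = s0 @ s1" by (simp add: s0_def s1_def)
  obtain s2 y where s1: "s1 = s2 @ [y]" and ls2: "length s2 = i"
    using ls1 by (cases s1 rule: rev_exhaust) auto
  have y: "s ! (Nsum I (Suc (length a)) - 1) = y"
    using NS s s1 ls0 ls2 by (simp add: nth_append n_def)
  have m: "map (\<lambda>j. s ! (Nsum I (Suc j) - 1)) [0..<length a]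
         = map (\<lambda>j. s0 ! (Nsum I0 (Suc j) - 1)) [0..<length a]"
  proof (rule map_cong[OF refl])
    fix j assume "j \<in> set [0..<length a]"
    then have j: "j < length a" by simp
    have "Suc j \<le> Nsum I0 (Suc j)" using Nsum_ge[of "Suc j" I0] j l by simp
    moreover have "Nsum I0 (Suc j) \<le> n" using Nsum_mono[of "Suc j" "length a" I0] j l n_def by simp
    ultimately have "Nsum I0 (Suc j) - 1 < length s0" using ls0 n_def by linarith
    then show "s ! (Nsum I (Suc j) - 1) = s0 ! (Nsum I0 (Suc j) - 1)"
      using NI0[OF j] s by (simp add: nth_append)
  qed
  have "monom (pad_comp (a @ [c]) I) s v
      = monom (pad_comp a I0) s0 v + (monom (replicate i 0) s2 v + monom [c] [y] v)"
    using pad_comp_snoc[OF l] I s s1 ls0 ls2 length_pad_comp[OF l]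
    by (simp add: monom_append[symmetric])
  also have "\<dots> = monom a (map (\<lambda>j. s0 ! (Nsum I0 (Suc j) - 1)) [0..<length a]) v + monom [c] [y] v"
    using snoc.IH[OF l ls0] by (simp add: monom_rep0)
  also have "\<dots> = monom (a @ [c]) (map (\<lambda>j. s0 ! (Nsum I0 (Suc j) - 1)) [0..<length a] @ [y]) v"
    by (simp add: monom_append)
  also have mm: "map (\<lambda>j. s0 ! (Nsum I0 (Suc j) - 1)) [0..<length a] @ [y]
     = map (\<lambda>j. s ! (Nsum I (Suc j) - 1)) [0..<length (a @ [c])]"
    using m y by simp
  finally show ?case .
qed


definition rk :: "nat list \<Rightarrow> nat \<Rightarrow> nat" where
  "rk s v = (THE i. i < length s \<and> s ! i = v)"

lemma rk_nth: "distinct s \<Longrightarrow> i < length s \<Longrightarrow> rk s (s ! i) = i"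
  unfolding rk_def by (rule the_equality) (auto simp: nth_eq_iff_index_eq)

lemma rk: "distinct s \<Longrightarrow> v \<in> set s \<Longrightarrow> rk s v < length s \<and> s ! rk s v = v"
proof -
  assume d: "distinct s" and v: "v \<in> set s"
  then obtain i where "i < length s" "s ! i = v" by (auto simp: in_set_conv_nth)
  then show ?thesis using rk_nth[OF d] by auto
qed

lemma sorted_nth_less_iff: "sorted_wrt (<) (s::nat list) \<Longrightarrow> i < length s \<Longrightarrow> j < length s \<Longrightarrow>
   (s ! i < s ! j) = (i < j)"
proof -
  assume a: "sorted_wrt (<) s" "i < length s" "j < length s"
  show ?thesis
  proof
    assume "s ! i < s ! j"
    show "i < j"
    proof (rule ccontr)
      assume "\<not> i < j"
      then have "j < i \<or> j = i" by auto
      moreover have "j < i \<Longrightarrow> s ! j < s ! i" using sorted_wrt_nth_less[OF a(1), of j i] a by blast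
      ultimately show False using \<open>s ! i < s ! j\<close> by auto
    qed
  qed (use a sorted_wrt_nth_less in auto)
qed

lemma sorted_nth_le_iff: "sorted_wrt (<) (s::nat list) \<Longrightarrow> i < length s \<Longrightarrow> j < length s \<Longrightarrow>
   (s ! i \<le> s ! j) = (i \<le> j)"
proof -
  assume a: "sorted_wrt (<) s" "i < length s" "j < length s"
  have "(s ! j < s ! i) = (j < i)" using sorted_nth_less_iff[OF a(1) a(3) a(2)] .
  then show ?thesis by (simp add: not_less[symmetric])
qed

lemma monom_ge: "j < length g \<Longrightarrow> g ! j \<le> monom g s (s ! j)"
  unfolding monom_def
  using member_le_sum[of j "{..<length g}" "\<lambda>i. if s ! i = s ! j then g ! i else 0"] by simp

lemma monom_pos_in: "length s = length g \<Longrightarrow> 0 < monom g s v \<Longrightarrow> v \<in> set s"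
proof (rule ccontr)
  assume "length s = length g" "0 < monom g s v" "v \<notin> set s"
  then have "\<forall>j\<in>{..<length g}. (if s ! j = v then g ! j else 0) = 0" by auto
  then have "monom g s v = 0" unfolding monom_def by (rule sum.neutral)
  then show False using \<open>0 < monom g s v\<close> by simp
qed

lemma finite_Mset:
  assumes "g \<noteq> []" "last g > 0"
  shows "finite {t \<in> idx_tuples (length g). monom g t = e}"
proof (cases "{t \<in> idx_tuples (length g). monom g t = e} = {}")
  case True then show ?thesis by (subst True) simp
next
  case False
  then obtain t0 where t0: "t0 \<in> idx_tuples (length g)" "monom g t0 = e" by blast
  define n where "n = length g"
  have n: "n \<ge> 1" using assms n_def by (cases g) auto
  have lg: "last g = g ! (n - 1)" using assms n_def by (simp add: last_conv_nth)
  have "{t \<in> idx_tuples (length g). monom g t = e} \<subseteq> {xs. set xs \<subseteq> {..Max (set t0)} \<and> length xs = n}"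
  proof (rule subsetI)
    fix t assume tt: "t \<in> {t \<in> idx_tuples (length g). monom g t = e}"
    then have t: "t \<in> idx_tuples (length g)" "monom g t = e" by auto
    have len: "length t = n" "sorted_wrt (<) t" using t by (auto simp: idx_tuples_def n_def)
    have "g ! (n - 1) \<le> e (t ! (n - 1))" using monom_ge[of "n-1" g t] t n n_def by simp
    then have "0 < monom g t0 (t ! (n - 1))" using assms lg t0 by simp
    then have m: "t ! (n - 1) \<in> set t0" using monom_pos_in[of t0 g] t0 by (simp add: idx_tuples_def)
    have "set t \<subseteq> {..Max (set t0)}"
    proof
      fix x assume "x \<in> set t"
      then obtain i where i: "i < n" "x = t ! i" using len by (auto simp: in_set_conv_nth)
      then have "x \<le> t ! (n - 1)" using sorted_nth_le_iff[of t i "n-1"] len n by simp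
      also have "\<dots> \<le> Max (set t0)" using m by simp
      finally show "x \<in> {..Max (set t0)}" by simp
    qed
    then show "t \<in> {xs. set xs \<subseteq> {..Max (set t0)} \<and> length xs = n}" using len by simp
  qed
  then show ?thesis by (rule finite_subset) (rule finite_lists_length_eq, simp)
qed


definition blk :: "nat list \<Rightarrow> nat \<Rightarrow> nat" where
  "blk b x = (LEAST j. x \<le> bsum b (Suc j))"

lemma blk_block: "bsum b j < x \<Longrightarrow> x \<le> bsum b (Suc j) \<Longrightarrow> blk b x = j"
  unfolding blk_def
proof (rule Least_equality)
  fix y assume a: "bsum b j < x" "x \<le> bsum b (Suc y)"
  show "j \<le> y"
  proof (rule ccontr)
    assume "\<not> j \<le> y"
    then have "bsum b (Suc y) \<le> bsum b j" by (intro bsum_mono) simp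
    then show False using a by simp
  qed
qed

lemma blk_le: "x \<le> bsum b (Suc j) \<Longrightarrow> blk b x \<le> j"
  unfolding blk_def by (rule Least_le)

lemma blk_props: "x \<le> bsum b (length b) \<Longrightarrow> b \<noteq> [] \<Longrightarrow>
   blk b x < length b \<and> x \<le> bsum b (Suc (blk b x))"
proof -
  assume a: "x \<le> bsum b (length b)" "b \<noteq> []"
  then have w: "x \<le> bsum b (Suc (length b - 1))" by simp
  have "blk b x \<le> length b - 1" using blk_le[OF w] .
  moreover have "x \<le> bsum b (Suc (blk b x))" unfolding blk_def by (rule LeastI[of "\<lambda>j. x \<le> bsum b (Suc j)", OF w])
  ultimately show ?thesis using a by (cases b) auto
qed

definition Fset :: "nat list \<Rightarrow> nat list \<Rightarrow> (nat \<Rightarrow> nat) set" where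
  "Fset b t = {f \<in> {1..bsum b (length b)} \<rightarrow>\<^sub>E UNIV.
     \<forall>j\<in>{1..length b}. f ` {1..bsum b j} \<subseteq> {1..t!(j-1)}}"

lemma Fset_eq:
  assumes "b \<noteq> []" "length t = length b" "sorted_wrt (<) t"
  shows "Fset b t = (\<Pi>\<^sub>E x\<in>{1..bsum b (length b)}. {1..t ! blk b x})"
proof (intro equalityI subsetI)
  fix f assume f: "f \<in> Fset b t"
  show "f \<in> (\<Pi>\<^sub>E x\<in>{1..bsum b (length b)}. {1..t ! blk b x})"
  proof (rule PiE_I)
    fix x assume x: "x \<in> {1..bsum b (length b)}"
    have bp: "blk b x < length b" "x \<le> bsum b (Suc (blk b x))" using blk_props[of x b] x assms by auto
    have all: "\<forall>j\<in>{1..length b}. f ` {1..bsum b j} \<subseteq> {1..t!(j-1)}" using f unfolding Fset_def by blast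
    have "f ` {1..bsum b (Suc (blk b x))} \<subseteq> {1..t ! (Suc (blk b x) - 1)}"
      using bspec[OF all, of "Suc (blk b x)"] bp by simp
    moreover have "f x \<in> f ` {1..bsum b (Suc (blk b x))}" using x bp by auto
    ultimately have "f x \<in> {1..t ! (Suc (blk b x) - 1)}" by blast
    then show "f x \<in> {1..t ! blk b x}" by simp
  next
    fix x assume "x \<notin> {1..bsum b (length b)}"
    then show "f x = undefined" using f unfolding Fset_def by (auto simp: PiE_def extensional_def)
  qed
next
  fix f assume f: "f \<in> (\<Pi>\<^sub>E x\<in>{1..bsum b (length b)}. {1..t ! blk b x})"
  have "\<forall>j\<in>{1..length b}. f ` {1..bsum b j} \<subseteq> {1..t!(j-1)}"
  proof (intro ballI subsetI)
    fix j y assume j: "j \<in> {1..length b}" and y: "y \<in> f ` {1..bsum b j}"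
    then obtain x where x: "x \<in> {1..bsum b j}" "y = f x" by auto
    have "bsum b j \<le> bsum b (length b)" using j by (intro bsum_mono) simp
    then have xB: "x \<in> {1..bsum b (length b)}" using x by auto
    have "blk b x \<le> j - 1" using x j by (intro blk_le) simp
    moreover have "j - 1 < length b" using j by auto
    ultimately have le: "t ! blk b x \<le> t ! (j - 1)"
      using sorted_nth_le_iff[of t "blk b x" "j - 1"] assms by simp
    have "f x \<in> {1..t ! blk b x}" using f xB by auto
    then show "y \<in> {1..t ! (j - 1)}" using le x by auto
  qed
  moreover have "f \<in> {1..bsum b (length b)} \<rightarrow>\<^sub>E UNIV" using f by (auto simp: PiE_def)
  ultimately show "f \<in> Fset b t" unfolding Fset_def by blast
qed

lemma prod_blk: "m \<le> length b \<Longrightarrow>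
  (\<Prod>x\<in>{1..bsum b m}. h (blk b x)) = (\<Prod>j<m. (h j :: nat) ^ (b ! j))"
proof (induction m)
  case 0 then show ?case by simp
next
  case (Suc m)
  have m: "m < length b" using Suc by simp
  have split: "{1..bsum b (Suc m)} = {1..bsum b m} \<union> {Suc (bsum b m)..bsum b (Suc m)}"
    using bsum_Suc[OF m] by auto
  have "(\<Prod>x\<in>{Suc (bsum b m)..bsum b (Suc m)}. h (blk b x)) = (\<Prod>x\<in>{Suc (bsum b m)..bsum b (Suc m)}. h m)"
    by (rule prod.cong) (auto intro!: arg_cong[where f=h] blk_block)
  also have "\<dots> = h m ^ (b ! m)" using bsum_Suc[OF m] by simp
  finally have "(\<Prod>x\<in>{1..bsum b (Suc m)}. h (blk b x)) = (\<Prod>x\<in>{1..bsum b m}. h (blk b x)) * h m ^ (b ! m)"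
    unfolding split by (subst prod.union_disjoint) auto
  then show ?case using Suc by simp
qed

lemma card_Fset:
  assumes "b \<noteq> []" "length t = length b" "sorted_wrt (<) t"
  shows "card (Fset b t) = (\<Prod>j<length b. (t ! j) ^ (b ! j))"
  using Fset_eq[OF assms] prod_blk[of "length b" b "\<lambda>j. t ! j"] by (simp add: card_PiE)

lemma finite_Fset:
  assumes "b \<noteq> []" "length t = length b" "sorted_wrt (<) t"
  shows "finite (Fset b t)"
  using Fset_eq[OF assms] by (simp add: finite_PiE)

definition Cset :: "nat list \<Rightarrow> nat list \<Rightarrow> (nat \<Rightarrow> nat) set" where
  "Cset b I = {f \<in> {1..bsum b (length b)} \<rightarrow>\<^sub>E {1..Nsum I (length b)}.
             (\<forall>j\<in>{1..length b}. f ` {1..bsum b j} \<subseteq> {1..Nsum I j}) \<and>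
             f ` {1..bsum b (length b)} \<union> {Nsum I j | j. j \<in> {1..length b}} = {1..Nsum I (length b)}}"

lemma c_coef_Cset: "c_coef b I = card (Cset b I)"
  by (simp add: c_coef_def Cset_def Let_def)

lemma finite_Cset: "finite (Cset b I)"
  by (rule finite_subset[of _ "{1..bsum b (length b)} \<rightarrow>\<^sub>E {1..Nsum I (length b)}"])
     (auto simp: Cset_def intro: finite_PiE)

lemma Cset_range:
  assumes len: "length I = length b" and g: "g \<in> Cset b I"
  shows "I \<in> I_range b"
proof -
  let ?k = "length b"
  let ?B = "bsum b ?k"
  have "I ! j \<le> sum_list (drop j b)" if j: "j < ?k" for j
  proof -
    define L where "L = Nsum I j"
    define U where "U = Nsum I (Suc j)"
    have U: "U = L + Suc (I ! j)" using Nsum_Suc[of j I] j len by (simp add: L_def U_def)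
    have UN: "U \<le> Nsum I ?k" using Nsum_mono[of "Suc j" ?k I] j len by (simp add: U_def)
    have sub: "{Suc L..<U} \<subseteq> g ` {Suc (bsum b j)..?B}"
    proof
      fix p assume p: "p \<in> {Suc L..<U}"
      have pN: "p \<in> {1..Nsum I ?k}" using p UN by auto
      have "p \<notin> {Nsum I l | l. l \<in> {1..?k}}"
      proof
        assume "p \<in> {Nsum I l | l. l \<in> {1..?k}}"
        then obtain l where l: "l \<in> {1..?k}" "p = Nsum I l" by auto
        show False
        proof (cases "l \<le> j")
          case True
          then have "Nsum I l \<le> L" using Nsum_mono[of l j I] j len by (simp add: L_def)
          then show False using p l by simp
        next
          case False
          then have "U \<le> Nsum I l" using Nsum_mono[of "Suc j" l I] l len by (simp add: U_def)
          then show False using p l by simp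
        qed
      qed
      then have "p \<in> g ` {1..?B}" using pN g unfolding Cset_def by blast
      then obtain x where x: "x \<in> {1..?B}" "p = g x" by auto
      have "\<not> x \<le> bsum b j"
      proof
        assume xj: "x \<le> bsum b j"
        then have j1: "j \<in> {1..?k}" using x j by (cases j) auto
        have "g ` {1..bsum b j} \<subseteq> {1..Nsum I j}" using g j1 unfolding Cset_def by blast
        moreover have "g x \<in> g ` {1..bsum b j}" using x xj by auto
        ultimately have "g x \<in> {1..Nsum I j}" by blast
        then have "g x \<le> L" by (simp add: L_def)
        then show False using p x by simp
      qed
      then show "p \<in> g ` {Suc (bsum b j)..?B}" using x by auto
    qed
    have "I ! j = card {Suc L..<U}" using U by simp
    also have "\<dots> \<le> card (g ` {Suc (bsum b j)..?B})" by (rule card_mono[OF _ sub]) simp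
    also have "\<dots> \<le> card {Suc (bsum b j)..?B}" by (rule card_image_le) simp
    also have "\<dots> = ?B - bsum b j" by simp
    also have "\<dots> = sum_list (drop j b)" using bsum_drop[of j b] j by simp
    finally show ?thesis .
  qed
  then show ?thesis using len by (simp add: I_range_def)
qed

lemma finite_I_range: "finite (I_range b)"
proof (rule finite_subset[of _ "{xs. set xs \<subseteq> {..sum_list b} \<and> length xs = length b}"])
  show "I_range b \<subseteq> {xs. set xs \<subseteq> {..sum_list b} \<and> length xs = length b}"
  proof
    fix I assume I: "I \<in> I_range b"
    have "set I \<subseteq> {..sum_list b}"
    proof
      fix x assume "x \<in> set I"
      then obtain j where j: "j < length I" "x = I ! j" by (auto simp: in_set_conv_nth)
      then have "x \<le> sum_list (drop j b)" using I by (auto simp: I_range_def)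
      also have "\<dots> = bsum b (length b) - bsum b j" using bsum_drop[of j b] j I by (simp add: I_range_def)
      also have "\<dots> \<le> sum_list b" by (simp add: bsum_def)
      finally show "x \<in> {..sum_list b}" by simp
    qed
    then show "I \<in> {xs. set xs \<subseteq> {..sum_list b} \<and> length xs = length b}" using I by (simp add: I_range_def)
  qed
qed (rule finite_lists_length_eq, simp)


definition tup :: "nat \<Rightarrow> nat list \<Rightarrow> nat list \<Rightarrow> nat list" where
  "tup k I s = map (\<lambda>j. s ! (Nsum I (Suc j) - 1)) [0..<k]"

lemma Nsum_idx:
  assumes "j < length I"
  shows "Nsum I (Suc j) - 1 < Nsum I (length I)" "1 \<le> Nsum I (Suc j)"
  using Nsum_mono[of "Suc j" "length I" I] Nsum_ge[of "Suc j" I] assms by auto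

lemma tup_props:
  assumes I: "length I = length a" and s: "s \<in> idx_tuples (Nsum I (length a))"
  shows "tup (length a) I s \<in> idx_tuples (length a)"
    "monom a (tup (length a) I s) = monom (pad_comp a I) s"
    "j < length a \<Longrightarrow> tup (length a) I s ! j = s ! (Nsum I (Suc j) - 1)"
proof -
  have ls: "length s = Nsum I (length a)" "sorted_wrt (<) s" "0 \<notin> set s" using s by (auto simp: idx_tuples_def)
  show "j < length a \<Longrightarrow> tup (length a) I s ! j = s ! (Nsum I (Suc j) - 1)" by (simp add: tup_def)
  show "monom a (tup (length a) I s) = monom (pad_comp a I) s"
    using monom_pad[OF I ls(1)] by (simp add: tup_def fun_eq_iff)
  have "sorted_wrt (<) (tup (length a) I s)"
    unfolding sorted_wrt_iff_nth_less
  proof (intro allI impI)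
    fix i j assume ij: "i < j" "j < length (tup (length a) I s)"
    then have j: "j < length a" by (simp add: tup_def)
    have "Nsum I (Suc i) < Nsum I (Suc j)" using Nsum_less[of "Suc i" "Suc j" I] ij j I by simp
    moreover have "1 \<le> Nsum I (Suc i)" using Nsum_idx[of i I] ij j I by simp
    ultimately have "Nsum I (Suc i) - 1 < Nsum I (Suc j) - 1" by simp
    moreover have "Nsum I (Suc j) - 1 < length s" using Nsum_idx[of j I] j I ls by simp
    ultimately show "tup (length a) I s ! i < tup (length a) I s ! j"
      using ij j sorted_nth_less_iff[OF ls(2), of "Nsum I (Suc i) - 1" "Nsum I (Suc j) - 1"]
      by (simp add: tup_def)
  qed
  moreover have "0 \<notin> set (tup (length a) I s)"
  proof
    assume "0 \<in> set (tup (length a) I s)"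
    then obtain j where j: "j < length a" "s ! (Nsum I (Suc j) - 1) = 0" by (auto simp: tup_def)
    have "Nsum I (Suc j) - 1 < length s" using Nsum_idx[of j I] j I ls by simp
    then have "0 \<in> set s" using j nth_mem by metis
    then show False using ls by simp
  qed
  ultimately show "tup (length a) I s \<in> idx_tuples (length a)" by (simp add: idx_tuples_def tup_def)
qed

definition fof :: "nat \<Rightarrow> (nat \<Rightarrow> nat) \<Rightarrow> nat list \<Rightarrow> nat \<Rightarrow> nat" where
  "fof B g s = restrict (\<lambda>x. s ! (g x - 1)) {1..B}"

lemma fof_Fset:
  assumes lb: "length b = length a" and I: "length I = length a"
    and g: "g \<in> Cset b I" and s: "s \<in> idx_tuples (Nsum I (length a))"
  shows "fof (bsum b (length b)) g s \<in> Fset b (tup (length a) I s)"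
proof -
  have ls: "length s = Nsum I (length a)" "sorted_wrt (<) s" "0 \<notin> set s" using s by (auto simp: idx_tuples_def)
  let ?B = "bsum b (length b)"
  have "\<forall>j\<in>{1..length b}. fof ?B g s ` {1..bsum b j} \<subseteq> {1..tup (length a) I s ! (j-1)}"
  proof (intro ballI subsetI)
    fix j y assume j: "j \<in> {1..length b}" and y: "y \<in> fof ?B g s ` {1..bsum b j}"
    then obtain x where x: "x \<in> {1..bsum b j}" "y = fof ?B g s x" by auto
    have "bsum b j \<le> ?B" using j by (intro bsum_mono) simp
    then have xB: "x \<in> {1..?B}" using x by auto
    have gj: "g ` {1..bsum b j} \<subseteq> {1..Nsum I j}" using g j unfolding Cset_def by blast
    have "g x \<in> {1..Nsum I j}" using subsetD[OF gj] x by blast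
    moreover have "Nsum I j \<le> Nsum I (length a)" using j lb I by (intro Nsum_mono) auto
    ultimately have gx: "1 \<le> g x" "g x - 1 \<le> Nsum I j - 1" "g x - 1 < length s" "Nsum I j - 1 < length s"
      using ls j Nsum_idx[of "j-1" I] I lb by auto
    have y1: "y = s ! (g x - 1)" using x xB by (simp add: fof_def)
    have "y \<noteq> 0" using y1 gx ls nth_mem by metis
    moreover have "y \<le> s ! (Nsum I j - 1)" using y1 gx sorted_nth_le_iff[OF ls(2)] by simp
    moreover have "tup (length a) I s ! (j-1) = s ! (Nsum I j - 1)"
      using j lb by (cases j) (auto simp: tup_def)
    ultimately show "y \<in> {1..tup (length a) I s ! (j-1)}" by simp
  qed
  moreover have "fof ?B g s \<in> {1..?B} \<rightarrow>\<^sub>E UNIV" by (simp add: fof_def)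
  ultimately show ?thesis unfolding Fset_def by blast
qed

lemma set_s_eq:
  assumes lb: "length b = length a" and I: "length I = length a"
    and g: "g \<in> Cset b I" and s: "s \<in> idx_tuples (Nsum I (length a))"
  shows "set s = fof (bsum b (length b)) g s ` {1..bsum b (length b)} \<union> set (tup (length a) I s)"
proof -
  have ls: "length s = Nsum I (length a)" "sorted_wrt (<) s" "0 \<notin> set s" using s by (auto simp: idx_tuples_def)
  let ?B = "bsum b (length b)"
  have cover: "g ` {1..?B} \<union> {Nsum I j | j. j \<in> {1..length b}} = {1..Nsum I (length a)}"
    using g lb unfolding Cset_def by auto
  show ?thesis
  proof (intro equalityI subsetI)
    fix v assume "v \<in> set s"
    then obtain p where p: "p < length s" "v = s ! p" by (auto simp: in_set_conv_nth)
    then have "Suc p \<in> {1..Nsum I (length a)}" using ls by simp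
    then have "Suc p \<in> g ` {1..?B} \<or> Suc p \<in> {Nsum I j | j. j \<in> {1..length b}}" using cover by blast
    then show "v \<in> fof ?B g s ` {1..?B} \<union> set (tup (length a) I s)"
    proof
      assume "Suc p \<in> g ` {1..?B}"
      then obtain x where x: "x \<in> {1..?B}" "Suc p = g x" by auto
      then have "g x - 1 = p" by simp
      then have "fof ?B g s x = v" using p x by (simp add: fof_def)
      then show ?thesis using x by blast
    next
      assume "Suc p \<in> {Nsum I j | j. j \<in> {1..length b}}"
      then obtain j where j: "j \<in> {1..length b}" "Nsum I j = Suc p" by auto
      then have "tup (length a) I s ! (j - 1) = v" using p lb by (cases j) (auto simp: tup_def)
      moreover have "j - 1 < length (tup (length a) I s)" using j(1) lb by (auto simp: tup_def)
      ultimately show ?thesis using nth_mem by blast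
    qed
  next
    fix v assume v: "v \<in> fof ?B g s ` {1..?B} \<union> set (tup (length a) I s)"
    show "v \<in> set s"
    proof (cases "v \<in> set (tup (length a) I s)")
      case True
      then obtain j where j: "j < length a" "v = s ! (Nsum I (Suc j) - 1)" by (auto simp: tup_def)
      then show ?thesis using Nsum_idx[of j I] I ls by simp
    next
      case False
      then obtain x where x: "x \<in> {1..?B}" "v = s ! (g x - 1)" using v by (auto simp: fof_def)
      have "g x \<in> {1..Nsum I (length a)}" using g x unfolding Cset_def by (auto simp: PiE_def lb)
      then have "g x - 1 < length s" using ls by auto
      then show ?thesis using x nth_mem by simp
    qed
  qed
qed


lemma Phi_inj:
  assumes lb: "length b = length a"
    and I: "I \<in> I_range b" and g: "g \<in> Cset b I" and s: "s \<in> idx_tuples (Nsum I (length a))"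
    and I': "I' \<in> I_range b" and g': "g' \<in> Cset b I'" and s': "s' \<in> idx_tuples (Nsum I' (length a))"
    and eqt: "tup (length a) I s = tup (length a) I' s'"
    and eqf: "fof (bsum b (length b)) g s = fof (bsum b (length b)) g' s'"
  shows "I = I' \<and> g = g' \<and> s = s'"
proof -
  let ?B = "bsum b (length b)"
  have lI: "length I = length a" "length I' = length a" using I I' lb by (auto simp: I_range_def)
  have ls: "length s = Nsum I (length a)" "sorted_wrt (<) s" "0 \<notin> set s" using s by (auto simp: idx_tuples_def)
  have ls': "length s' = Nsum I' (length a)" "sorted_wrt (<) s'" "0 \<notin> set s'" using s' by (auto simp: idx_tuples_def)
  have "set s = set s'"
    using set_s_eq[OF lb lI(1) g s] set_s_eq[OF lb lI(2) g' s'] eqt eqf by simp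
  then have ss: "s' = s" using strict_sorted_equal[OF ls(2) ls'(2)] by simp
  have d: "distinct s" using ls(2) strict_sorted_iff by blast
  have gg: "g = g'"
  proof
    fix x
    show "g x = g' x"
    proof (cases "x \<in> {1..?B}")
      case True
      have gx: "g x \<in> {1..Nsum I (length a)}" using g True unfolding Cset_def by (auto simp: PiE_def lb)
      have gx': "g' x \<in> {1..Nsum I' (length a)}" using g' True unfolding Cset_def by (auto simp: PiE_def lb)
      have "fof ?B g s x = fof ?B g' s' x" using eqf by simp
      then have "s ! (g x - 1) = s ! (g' x - 1)" using True ss by (simp add: fof_def)
      moreover have "g x - 1 < length s" "g' x - 1 < length s" using gx gx' ls ls' ss by auto
      ultimately have "g x - 1 = g' x - 1" using nth_eq_iff_index_eq[OF d] by blast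
      then show ?thesis using gx gx' by (simp add: atLeastAtMost_iff) linarith
    next
      case False
      then show ?thesis using g g' unfolding Cset_def by (auto simp: PiE_def extensional_def)
    qed
  qed
  have "\<And>j. j \<le> length I \<Longrightarrow> Nsum I j = Nsum I' j"
  proof -
    fix j assume j: "j \<le> length I"
    show "Nsum I j = Nsum I' j"
    proof (cases j)
      case (Suc j0)
      then have j0: "j0 < length a" using j lI by simp
      have "tup (length a) I s ! j0 = tup (length a) I' s' ! j0" using eqt by simp
      then have e1: "s ! (Nsum I (Suc j0) - 1) = s ! (Nsum I' (Suc j0) - 1)"
        using j0 ss by (simp add: tup_def)
      have "Nsum I (Suc j0) - 1 < length s" "1 \<le> Nsum I (Suc j0)" using Nsum_idx[of j0 I] j0 lI ls by auto
      moreover have "Nsum I' (Suc j0) - 1 < length s" "1 \<le> Nsum I' (Suc j0)" using Nsum_idx[of j0 I'] j0 lI ls' ss by auto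
      ultimately have "Nsum I (Suc j0) - 1 = Nsum I' (Suc j0) - 1" using e1 nth_eq_iff_index_eq[OF d] by blast
      then show ?thesis using Suc \<open>1 \<le> Nsum I (Suc j0)\<close> \<open>1 \<le> Nsum I' (Suc j0)\<close> by simp
    qed simp
  qed
  then have "I = I'" using Nsum_inj[of I I'] lI by simp
  then show ?thesis using gg ss by simp
qed


lemma Phi_surj:
  assumes lb: "length b = length a" and ne: "a \<noteq> []"
    and t: "t \<in> idx_tuples (length a)" and f: "f \<in> Fset b t"
  shows "\<exists>I g s. I \<in> I_range b \<and> g \<in> Cset b I \<and> s \<in> idx_tuples (Nsum I (length a)) \<and>
      tup (length a) I s = t \<and> fof (bsum b (length b)) g s = f"
proof -
  define k where "k = length a"
  define B where "B = bsum b (length b)"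
  have k1: "1 \<le> k" using ne by (simp add: k_def Suc_le_eq)
  have lt: "length t = k" "sorted_wrt (<) t" "0 \<notin> set t" using t by (auto simp: idx_tuples_def k_def)
  define m where "m = t ! (k - 1)"
  have fall: "\<forall>j\<in>{1..length b}. f ` {1..bsum b j} \<subseteq> {1..t!(j-1)}" and fPi: "f \<in> {1..B} \<rightarrow>\<^sub>E UNIV"
    using f by (auto simp: Fset_def B_def)
  have fB: "f x \<in> {1..m}" if x: "x \<in> {1..B}" for x
  proof -
    have "f ` {1..bsum b (length b)} \<subseteq> {1..t!(length b-1)}" using bspec[OF fall, of "length b"] k1 lb k_def by simp
    moreover have "f x \<in> f ` {1..bsum b (length b)}" using x by (simp add: B_def)
    ultimately have "f x \<in> {1..t!(length b-1)}" by blast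
    then show ?thesis using lb by (simp add: m_def k_def)
  qed
  have tle: "j < k \<Longrightarrow> t ! j \<le> m" for j
    using sorted_nth_le_iff[OF lt(2), of j "k-1"] lt(1) k1 by (simp add: m_def)
  define S where "S = f ` {1..B} \<union> set t"
  have finS: "finite S" by (simp add: S_def)
  define s where "s = sorted_list_of_set S"
  have setS: "set s = S" using finS by (simp add: s_def)
  have ss: "sorted_wrt (<) s" by (simp add: s_def strict_sorted_list_of_set)
  have d: "distinct s" using ss strict_sorted_iff by blast
  define r where "r = rk s"
  have rkS: "v \<in> S \<Longrightarrow> r v < length s \<and> s ! (r v) = v" for v using rk[OF d, of v] setS by (simp add: r_def)
  have rk_le: "v \<in> S \<Longrightarrow> w \<in> S \<Longrightarrow> (r v \<le> r w) = (v \<le> w)" for v w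
    using rkS[of v] rkS[of w] sorted_nth_le_iff[OF ss, of "r v" "r w"] by simp
  have rk_less: "v \<in> S \<Longrightarrow> w \<in> S \<Longrightarrow> (r v < r w) = (v < w)" for v w
    using rkS[of v] rkS[of w] sorted_nth_less_iff[OF ss, of "r v" "r w"] by simp
  have tS: "j < k \<Longrightarrow> t ! j \<in> S" for j using lt(1) by (simp add: S_def)
  have mS: "m \<in> S" using tS[of "k-1"] k1 by (simp add: m_def)
  have Sle: "v \<in> S \<Longrightarrow> 1 \<le> v \<and> v \<le> m" for v
  proof -
    assume "v \<in> S"
    then show ?thesis
    proof (unfold S_def, elim UnE)
      assume "v \<in> f ` {1..B}" then show ?thesis using fB by auto
    next
      assume v: "v \<in> set t"
      then obtain j where j: "j < k" "v = t ! j" using lt(1) by (auto simp: in_set_conv_nth)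
      then show ?thesis using tle[of j] lt(3) v by (cases v) auto
    qed
  qed
  have len_s: "length s = Suc (r m)"
  proof (rule ccontr)
    assume "length s \<noteq> Suc (r m)"
    then have lt2: "Suc (r m) < length s" using rkS[OF mS] by simp
    then have "s ! Suc (r m) \<in> S" using setS nth_mem by blast
    then have "s ! Suc (r m) \<le> m" using Sle by blast
    moreover have "s ! (r m) < s ! Suc (r m)" using sorted_nth_less_iff[OF ss, of "r m" "Suc (r m)"] lt2 by simp
    ultimately show False using rkS[OF mS] by simp
  qed
  define I where "I = map (\<lambda>j. if j = 0 then r (t!0) else r (t!j) - r (t!(j-1)) - 1) [0..<k]"
  have lI: "length I = k" by (simp add: I_def)
  have NI: "j < k \<Longrightarrow> Nsum I (Suc j) = Suc (r (t ! j))" for j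
  proof (induction j)
    case 0 then show ?case using Nsum_Suc[of 0 I] lI by (simp add: I_def)
  next
    case (Suc j)
    have "t ! j < t ! Suc j" using sorted_nth_less_iff[OF lt(2), of j "Suc j"] Suc.prems lt(1) by simp
    then have "r (t ! j) < r (t ! Suc j)" using rk_less tS Suc.prems by simp
    moreover have "Nsum I (Suc (Suc j)) = Nsum I (Suc j) + Suc (I ! Suc j)"
      using Nsum_Suc[of "Suc j" I] lI Suc.prems by simp
    ultimately show ?case using Suc by (simp add: I_def)
  qed
  have NIk: "Nsum I k = length s"
    using NI[of "k-1"] k1 len_s by (simp add: m_def)
  define g where "g = restrict (\<lambda>x. Suc (r (f x))) {1..B}"
  have fS: "x \<in> {1..B} \<Longrightarrow> f x \<in> S" for x by (simp add: S_def)
  have sI: "s \<in> idx_tuples (Nsum I (length a))"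
  proof -
    have "0 \<notin> set s" using Sle setS by fastforce
    then show ?thesis using NIk ss by (simp add: idx_tuples_def k_def)
  qed
  have tupI: "tup (length a) I s = t"
  proof (rule nth_equalityI)
    show "length (tup (length a) I s) = length t" using lt by (simp add: tup_def k_def)
    fix j assume "j < length (tup (length a) I s)"
    then have j: "j < k" by (simp add: tup_def k_def)
    then show "tup (length a) I s ! j = t ! j" using NI[OF j] rkS[OF tS[OF j]] by (simp add: tup_def k_def)
  qed
  have fofI: "fof B g s = f"
  proof
    fix x show "fof B g s x = f x"
    proof (cases "x \<in> {1..B}")
      case True then show ?thesis using rkS[OF fS[OF True]] by (simp add: fof_def g_def)
    next
      case False then show ?thesis using fPi by (auto simp: fof_def PiE_def extensional_def)
    qed
  qed
  have gC: "g \<in> Cset b I"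
  proof -
    have ga: "g \<in> {1..B} \<rightarrow>\<^sub>E {1..Nsum I k}"
      unfolding g_def restrict_PiE_iff
    proof
      fix x assume x: "x \<in> {1..B}"
      have "r (f x) \<le> r m" using rk_le[OF fS[OF x] mS] fB[OF x] by simp
      then show "Suc (r (f x)) \<in> {1..Nsum I k}" using NIk len_s by simp
    qed
    have gb: "\<forall>j\<in>{1..length b}. g ` {1..bsum b j} \<subseteq> {1..Nsum I j}"
    proof (intro ballI subsetI)
      fix j y assume j: "j \<in> {1..length b}" and y: "y \<in> g ` {1..bsum b j}"
      then obtain x where x: "x \<in> {1..bsum b j}" "y = g x" by auto
      have "bsum b j \<le> B" using j by (simp add: B_def bsum_mono)
      then have xB: "x \<in> {1..B}" using x by auto
      have "f x \<in> {1..t!(j-1)}" using bspec[OF fall j] x by blast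
      moreover have j1: "j - 1 < k" using j lb k_def by auto
      ultimately have "r (f x) \<le> r (t ! (j-1))" using rk_le[OF fS[OF xB] tS[OF j1]] by simp
      moreover have "Nsum I j = Suc (r (t ! (j-1)))" using NI[OF j1] j by simp
      ultimately show "y \<in> {1..Nsum I j}" using x xB by (simp add: g_def)
    qed
    have gc: "g ` {1..B} \<union> {Nsum I j | j. j \<in> {1..length b}} = {1..Nsum I k}"
    proof (intro equalityI subsetI)
      fix p assume "p \<in> g ` {1..B} \<union> {Nsum I j | j. j \<in> {1..length b}}"
      then show "p \<in> {1..Nsum I k}"
      proof (elim UnE)
        assume "p \<in> g ` {1..B}" then show ?thesis using ga by (auto simp: PiE_def)
      next
        assume "p \<in> {Nsum I j | j. j \<in> {1..length b}}"
        then obtain j where j: "j \<in> {1..length b}" "p = Nsum I j" by auto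
        then have "Nsum I j \<le> Nsum I k" "1 \<le> Nsum I j" using Nsum_mono[of j k I] Nsum_ge[of j I] lI lb k_def by auto
        then show ?thesis using j by simp
      qed
    next
      fix p assume p: "p \<in> {1..Nsum I k}"
      then have p1: "p - 1 < length s" using NIk by auto
      then have v: "s ! (p - 1) \<in> S" using setS nth_mem by blast
      have rv: "r (s ! (p - 1)) = p - 1" using rk_nth[OF d p1] by (simp add: r_def)
      show "p \<in> g ` {1..B} \<union> {Nsum I j | j. j \<in> {1..length b}}"
      proof (cases "s ! (p - 1) \<in> f ` {1..B}")
        case True
        then obtain x where x: "x \<in> {1..B}" "s ! (p - 1) = f x" by auto
        then have "g x = p" using rv p by (simp add: g_def)
        then have "p \<in> g ` {1..B}" using x(1) by (metis image_eqI)
        then show ?thesis by (rule UnI1)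
      next
        case False
        then have "s ! (p - 1) \<in> set t" using v by (simp add: S_def)
        then obtain j where j: "j < k" "s ! (p - 1) = t ! j" using lt(1) by (auto simp: in_set_conv_nth)
        then have "Nsum I (Suc j) = p" using NI[OF j(1)] rv p by simp
        moreover have "Suc j \<in> {1..length b}" using j lb k_def by simp
        ultimately have "p \<in> {Nsum I j | j. j \<in> {1..length b}}" by blast
        then show ?thesis by (rule UnI2)
      qed
    qed
    have kb: "length b = k" using lb k_def by simp
    have ga': "g \<in> {1..bsum b (length b)} \<rightarrow>\<^sub>E {1..Nsum I (length b)}" using ga unfolding kb B_def .
    have gc': "g ` {1..bsum b (length b)} \<union> {Nsum I j | j. j \<in> {1..length b}} = {1..Nsum I (length b)}"
      using gc unfolding kb B_def .
    show ?thesis unfolding Cset_def mem_Collect_eq by (intro conjI ga' gb gc')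
  qed
  have "I \<in> I_range b" using Cset_range[OF _ gC] lI lb k_def by simp
  moreover have fofI': "fof (bsum b (length b)) g s = f" using fofI by (simp add: B_def)
  ultimately show ?thesis using gC sI tupI
    by (intro exI[of _ I] exI[of _ g] exI[of _ s] conjI)
qed


lemma pad_last:
  assumes "length I = length a" "a \<noteq> []"
  shows "pad_comp a I \<noteq> [] \<and> last (pad_comp a I) = last a"
proof -
  obtain a0 c where a: "a = a0 @ [c]" using assms(2) by (cases a rule: rev_exhaust) auto
  obtain I0 i where I: "I = I0 @ [i]" using assms a by (cases I rule: rev_exhaust) auto
  have "length I0 = length a0" using assms a I by simp
  then show ?thesis using pad_comp_snoc[of I0 a0 c i] a I by simp
qed

theorem proposition5p4:
  fixes a b :: "nat list"
  assumes "length a \<ge> 1" and "length b = length a" and "last a > 0"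
  shows "Mhat a b = (\<lambda>e. \<Sum>I \<in> I_range b. c_coef b I * M (pad_comp a I) e)"
proof
  fix e
  have ne: "a \<noteq> []" using assms(1) by auto
  have lb: "length b = length a" by fact
  have bne: "b \<noteq> []" using ne lb by auto
  define T where "T = {t \<in> idx_tuples (length a). monom a t = e}"
  define SI where "SI I = {s \<in> idx_tuples (Nsum I (length a)). monom (pad_comp a I) s = e}" for I
  define AS where "AS = Sigma T (Fset b)"
  define BS where "BS = Sigma (I_range b) (\<lambda>I. Cset b I \<times> SI I)"
  define Phi where "Phi = (\<lambda>(I :: nat list, g :: nat \<Rightarrow> nat, s :: nat list).
      (tup (length a) I s, fof (bsum b (length b)) g s))"
  have finT: "finite T" unfolding T_def by (rule finite_Mset[OF ne assms(3)])
  have Tprops: "t \<in> T \<Longrightarrow> length t = length b \<and> sorted_wrt (<) t" for t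
    using lb by (auto simp: T_def idx_tuples_def)
  have "Mhat a b e = (\<Sum>t\<in>T. card (Fset b t))"
    unfolding Mhat_def T_def[symmetric]
    by (rule sum.cong[OF refl]) (use card_Fset[OF bne] Tprops lb in auto)
  also have "\<dots> = card AS"
    unfolding AS_def by (rule card_SigmaI[symmetric]) (use finT finite_Fset[OF bne] Tprops in auto)
  finally have L: "Mhat a b e = card AS" .
  have lenI: "I \<in> I_range b \<Longrightarrow> length I = length a" for I using lb by (simp add: I_range_def)
  have finSI: "I \<in> I_range b \<Longrightarrow> finite (SI I)" for I
    using finite_Mset[of "pad_comp a I" e] pad_last[OF lenI ne] assms(3) length_pad_comp[OF lenI]
    by (simp add: SI_def)
  have "(\<Sum>I\<in>I_range b. c_coef b I * M (pad_comp a I) e) = (\<Sum>I\<in>I_range b. card (Cset b I \<times> SI I))"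
  proof (rule sum.cong[OF refl])
    fix I assume I: "I \<in> I_range b"
    have "M (pad_comp a I) e = card (SI I)"
      using length_pad_comp[OF lenI[OF I]] by (simp add: M_def SI_def)
    then show "c_coef b I * M (pad_comp a I) e = card (Cset b I \<times> SI I)"
      by (simp add: c_coef_Cset card_cartesian_product)
  qed
  also have "\<dots> = card BS"
    unfolding BS_def by (rule card_SigmaI[symmetric]) (use finite_I_range finite_Cset finSI in auto)
  finally have R: "(\<Sum>I\<in>I_range b. c_coef b I * M (pad_comp a I) e) = card BS" .
  have bij: "bij_betw Phi BS AS"
  proof (rule bij_betw_imageI)
    show "inj_on Phi BS"
    proof (rule inj_onI)
      fix p q assume p: "p \<in> BS" and q: "q \<in> BS" and eq: "Phi p = Phi q"
      obtain I g s where pp: "p = (I, g, s)" by (cases p) auto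
      obtain I' g' s' where qq: "q = (I', g', s')" by (cases q) auto
      show "p = q"
        using Phi_inj[OF lb, of I g s I' g' s'] p q eq pp qq
        by (auto simp: BS_def SI_def Phi_def)
    qed
  next
    show "Phi ` BS = AS"
    proof (intro equalityI subsetI)
      fix y assume "y \<in> Phi ` BS"
      then obtain I g s where x: "(I, g, s) \<in> BS" "y = Phi (I, g, s)" by auto
      then have I: "I \<in> I_range b" and g: "g \<in> Cset b I" and s: "s \<in> idx_tuples (Nsum I (length a))"
        and me: "monom (pad_comp a I) s = e"
        by (auto simp: BS_def SI_def)
      have "tup (length a) I s \<in> T"
        using tup_props[OF lenI[OF I] s] me by (simp add: T_def)
      moreover have "fof (bsum b (length b)) g s \<in> Fset b (tup (length a) I s)"
        using fof_Fset[OF lb lenI[OF I] g s] .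
      ultimately show "y \<in> AS" using x by (simp add: AS_def Phi_def)
    next
      fix y assume "y \<in> AS"
      then obtain t f where y: "y = (t, f)" "t \<in> T" "f \<in> Fset b t" by (auto simp: AS_def)
      then have t: "t \<in> idx_tuples (length a)" "monom a t = e" by (auto simp: T_def)
      obtain I g s where I: "I \<in> I_range b" and g: "g \<in> Cset b I"
        and s: "s \<in> idx_tuples (Nsum I (length a))" and tt: "tup (length a) I s = t"
        and ff: "fof (bsum b (length b)) g s = f"
        using Phi_surj[OF lb ne t(1) y(3)] by blast
      have "monom (pad_comp a I) s = e" using tup_props(2)[OF lenI[OF I] s] tt t(2) by simp
      then have "(I, g, s) \<in> BS" using I g s by (simp add: BS_def SI_def)
      moreover have "Phi (I, g, s) = y" using tt ff y by (simp add: Phi_def)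
      ultimately show "y \<in> Phi ` BS" by (metis image_eqI)
    qed
  qed
  show "Mhat a b e = (\<Sum>I\<in>I_range b. c_coef b I * M (pad_comp a I) e)"
    using L R bij_betw_same_card[OF bij] by simp
qed

end
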